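(* Let $a$ be an odd positive integer and $b$ a positive integer. Then there are infinitely many practical numbers of the form $an+b$ with $n$ a nonnegative integer.
   Context: A positive integer $N$ is called a practical number if every integer in $[1,N]$ can be expressed as a sum of distinct positive divisors of $N$. *)

theory Defs
  imports Main
begin

definition practical :: "nat \<Rightarrow> bool" where
  "practical N \<longleftrightarrow> N > 0 \<and>
     (\<forall>m\<in>{1..N}. \<exists>S. S \<subseteq> {d. d dvd N} \<and> \<Sum>S = m)"

end

theory Submission
  imports Defs "HOL-Number_Theory.Number_Theory"
begin

lemma bin_rep:
  fixes c :: nat
  shows "\<forall>r < 2^n. \<exists>S. S \<subseteq> (\<lambda>i. c*2^i) ` {..<n} \<and> \<Sum>S = c*r"
proof (induction n)
  case 0
  then show ?case by auto
next
  case (Suc n)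
  show ?case
  proof (intro allI impI)
    fix r :: nat assume r: "r < 2^Suc n"
    show "\<exists>S. S \<subseteq> (\<lambda>i. c*2^i) ` {..<Suc n} \<and> \<Sum>S = c*r"
    proof (cases "r < 2^n")
      case True
      then obtain S where "S \<subseteq> (\<lambda>i. c*2^i) ` {..<n}" "\<Sum>S = c*r" using Suc by blast
      moreover have "(\<lambda>i. c*2^i) ` {..<n} \<subseteq> (\<lambda>i. c*2^i) ` {..<Suc n}" by (rule image_mono) auto
      ultimately show ?thesis by (intro exI[of _ S]) auto
    next
      case False
      hence "r - 2^n < 2^n" using r by auto
      then obtain S where S: "S \<subseteq> (\<lambda>i. c*2^i) ` {..<n}" "\<Sum>S = c*(r-2^n)" using Suc by blast
      show ?thesis
      proof (cases "c = 0")
        case True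
        then show ?thesis by (intro exI[of _ "{}"]) auto
      next
        case False
        have fin: "finite S" using S(1) finite_subset by blast
        have nin: "c*2^n \<notin> S"
        proof
          assume "c*2^n \<in> S"
          then obtain i where "i < n" "c*2^n = c*2^i" using S(1) by auto
          hence "(2::nat)^n = 2^i" using False by simp
          thus False using \<open>i<n\<close> by simp
        qed
        have "\<Sum>(insert (c*2^n) S) = c*2^n + c*(r-2^n)" using fin nin S(2) by simp
        also have "\<dots> = c*r" using \<open>\<not> r < 2^n\<close> by (simp add: algebra_simps)
        finally have "\<Sum>(insert (c*2^n) S) = c*r" .
        moreover have "(\<lambda>i. c*2^i) ` {..<n} \<subseteq> (\<lambda>i. c*2^i) ` {..<Suc n}" by (rule image_mono) auto
        moreover have "c*2^n \<in> (\<lambda>i. c*2^i) ` {..<Suc n}" by auto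
        ultimately show ?thesis using S(1)
          by (intro exI[of _ "insert (c*2^n) S"]) auto
      qed
    qed
  qed
qed

lemma practical_2pow:
  fixes m k :: nat
  assumes "odd m" "m \<le> 2^(k+1)"
  shows "practical (2^k * m)"
  unfolding practical_def
proof (intro conjI ballI)
  have "m > 0" using assms(1) by (cases m) auto
  thus "2^k*m > 0" by simp
  fix x assume x: "x \<in> {1..2^k*m}"
  define t r where "t = x div m" and "r = x mod m"
  have xr: "x = m*t + r" unfolding t_def r_def by simp
  have "r < m" unfolding r_def using \<open>m>0\<close> by simp
  hence r2: "r < 2^(k+1)" using assms(2) by simp
  have "t \<le> 2^k" unfolding t_def using x \<open>m>0\<close>
    by (metis atLeastAtMost_iff div_le_mono nonzero_mult_div_cancel_right not_gr0)
  moreover have "(2::nat)^k < 2^(k+1)" by simp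
  ultimately have t2: "t < 2^(k+1)" by linarith
  obtain S1 where S1: "S1 \<subseteq> (\<lambda>i. 1*2^i) ` {..<k+1}" "\<Sum>S1 = 1*r"
    using bin_rep[of "k+1" 1] r2 by blast
  obtain S2 where S2: "S2 \<subseteq> (\<lambda>i. m*2^i) ` {..<k+1}" "\<Sum>S2 = m*t"
    using bin_rep[of "k+1" m] t2 by blast
  have f1: "finite S1" using S1(1) finite_subset by blast
  have f2: "finite S2" using S2(1) finite_subset by blast
  show "\<exists>S. S \<subseteq> {d. d dvd 2^k*m} \<and> \<Sum>S = x"
  proof (cases "m = 1")
    case True
    hence "r = 0" using \<open>r<m\<close> by simp
    have "S2 \<subseteq> {d. d dvd 2^k*m}"
    proof
      fix d assume "d \<in> S2"
      then obtain i where "i < Suc k" "d = m*2^i" using S2(1) by auto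
      hence "i \<le> k" "d = m*2^i" by auto
      thus "d \<in> {d. d dvd 2^k*m}" by (simp add: le_imp_power_dvd mult.commute)
    qed
    thus ?thesis using S2(2) xr \<open>r=0\<close> by auto
  next
    case False
    have disj: "S1 \<inter> S2 = {}"
    proof (rule ccontr)
      assume "S1 \<inter> S2 \<noteq> {}"
      then obtain i j where "(2::nat)^i = m*2^j" using S1(1) S2(1) by fastforce
      hence "m dvd 2^i" by simp
      moreover have "coprime m (2^i)" using assms(1) by simp
      ultimately have "is_unit m" using coprime_common_divisor[of m "2^i" m] dvd_refl by metis
      hence "m = 1" by simp
      thus False using False by simp
    qed
    have sub: "S1 \<union> S2 \<subseteq> {d. d dvd 2^k*m}"
    proof
      fix d assume "d \<in> S1 \<union> S2"
      then obtain i where "i < Suc k" "d = 2^i \<or> d = m*2^i" using S1(1) S2(1) by auto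
      hence "i \<le> k" "d = 2^i \<or> d = m*2^i" by auto
      thus "d \<in> {d. d dvd 2^k*m}"
        by (auto simp add: le_imp_power_dvd mult.commute dvd_mult2)
    qed
    have "\<Sum>(S1 \<union> S2) = \<Sum>S1 + \<Sum>S2" using f1 f2 disj by (simp add: sum.union_disjoint)
    thus ?thesis using sub S1(2) S2(2) xr by (intro exI[of _ "S1 \<union> S2"]) auto
  qed
qed

theorem corollary2p3:
  fixes a b :: nat
  assumes "odd a" and "a > 0" and "b > 0"
  shows "infinite {N. practical N \<and> (\<exists>n::nat. N = a * n + b)}"
proof -
  define m where "m = (if odd b then b else b + a)"
  have mo: "odd m" using assms(1) unfolding m_def by auto
  have mb: "[m = b] (mod a)" "b \<le> m" unfolding m_def by (auto simp: cong_def)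
  define p where "p = totient a"
  have p0: "p > 0" unfolding p_def using assms(2) by simp
  have cop: "coprime 2 a" using assms(1) by simp
  have eu: "[2^p = 1] (mod a)" unfolding p_def
    by (metis cop coprime_commute euler_theorem)
  define f where "f j = 2^((j+m)*p) * m" for j
  have mono: "strict_mono f"
  unfolding strict_mono_Suc_iff
  proof
    fix j
    have m0: "m > 0" using mo by (cases m) auto
    have "(2::nat)^((j+m)*p) < 2^((Suc j+m)*p)" using p0 by (intro power_strict_increasing) auto
    thus "f j < f (Suc j)" unfolding f_def using m0 by simp
  qed
  have "range f \<subseteq> {N. practical N \<and> (\<exists>n::nat. N = a * n + b)}"
  proof clarify
    fix j
    define k where "k = (j+m)*p"
    have "m < 2^m" by (rule less_exp)
    also have "\<dots> \<le> 2^(k+1)"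
    proof (intro power_increasing)
      have "j+m \<le> (j+m)*p" using p0 by simp
      thus "m \<le> k+1" unfolding k_def by linarith
    qed simp
    finally have "m \<le> 2^(k+1)" by simp
    hence pr: "practical (f j)" unfolding f_def k_def[symmetric] using practical_2pow mo by simp
    have "[2^k = 1] (mod a)" unfolding k_def using cong_pow[OF eu, of "j+m"]
      by (simp add: power_mult mult.commute)
    hence "[f j = 1*m] (mod a)" unfolding f_def k_def[symmetric] by (intro cong_mult) auto
    hence c: "[f j = b] (mod a)" using mb(1) cong_trans by auto
    have "b \<le> f j" unfolding f_def using mb(2) by (metis le_trans mult_le_mono2 mult.commute mult_1 one_le_numeral one_le_power)
    hence "a dvd f j - b" using c cong_altdef_nat by blast
    then obtain n where "f j - b = a*n" by auto
    hence "f j = a*n + b" using \<open>b \<le> f j\<close> by simp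
    with pr show "practical (f j) \<and> (\<exists>n. f j = a*n + b)" by blast
  qed
  moreover have "infinite (range f)" using mono strict_mono_imp_inj_on range_inj_infinite by blast
  ultimately show ?thesis using infinite_super by blast
qed

end
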